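(* Let $C=c_0c_1\dots c_{m-1}c_0$ and $D=(0)(1)\dots(n-1)(0)$ be reflexive digraph cycles with $D$ non-contractible, and let $i \in \{1,\dots,n\}$ (a vertex of $D$, with $n \equiv 0$). The graph $\mathrm{Mon}_1(C,D;i)$ is connected. Moreover, if it is nonempty, there are elements $\Phi_i^m$ and $\Phi_i^M$ of $\mathrm{Mon}_1(C,D;i)$ such that for every element $\phi$ of $\mathrm{Mon}_1(C,D;i)$ there is a sequence of monotone one-step up edges, through elements of $\mathrm{Mon}_1(C,D;i)$, from $\Phi_i^m$ to $\phi$, and one from $\phi$ to $\Phi_i^M$.
   Context: A digraph is a binary relation $\to$ on a finite vertex set; reflexive means every vertex has a loop. A digraph cycle $C=c_0c_1\dots c_{m-1}c_0$ (indices mod $m$, $m\ge 3$) has underlying graph the cycle with edges $c_ic_{i+1}$; $D=(0)(1)\dots(n-1)(0)$ has vertex set the integers mod $n$. $D$ is non-contractible if it has length at least $4$ or is a directed $3$-cycle. A homomorphism $\phi:C\to D$ satisfies $u\to v\Rightarrow\phi(u)\to\phi(v)$. $\mathrm{Hom}(C,D)$ is the digraph on homomorphisms with $\phi\to\phi'$ iff $\phi(u)\to\phi'(v)$ for all arcs $u\to v$ of $C$; connectivity refers to its underlying graph. Under $\phi$, edge $c_ic_{i+1}$ is increasing, stationary or decreasing as $\phi(c_{i+1})-\phi(c_i)$ is $1,0,-1$ (mod $n$); the wind of $\phi$ is (number of increasing minus number of decreasing edges)$/n$. $\mathrm{Mon}_1(C,D;i)$ is the subgraph of $\mathrm{Hom}(C,D)$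 induced by the homomorphisms $\phi$ of wind $1$ in which every edge is increasing or stationary and with $\phi(c_0)=i$. A monotone one-step up edge is a pair $(\phi,\phi')$ of such monotone wind-$1$ homomorphisms where, for some subpath of $C$ with vertex set $S$ all of whose edges are stationary under $\phi$ (so $\phi(S)=\{d\}$), $\phi'$ agrees with $\phi$ off $S$ and maps $S$ to $d+1$ (such $\phi,\phi'$ are adjacent in $\mathrm{Hom}(C,D)$). *)

theory Defs
  imports Main "HOL-Library.FuncSet" Complex_Main
begin

text \<open>A reflexive digraph cycle c_0 c_1 ... c_{m-1} c_0 is modelled on the vertex set
  {0..<m} (vertex c_j is j) by its arc relation A.\<close>

definition refl_cycle :: "nat \<Rightarrow> (nat \<Rightarrow> nat \<Rightarrow> bool) \<Rightarrow> bool" where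
  "refl_cycle m A \<longleftrightarrow> m \<ge> 3
     \<and> (\<forall>u v. A u v \<longrightarrow> u < m \<and> v < m)
     \<and> (\<forall>u<m. A u u)
     \<and> (\<forall>u v. A u v \<longrightarrow> u = v \<or> v = Suc u mod m \<or> u = Suc v mod m)
     \<and> (\<forall>u<m. A u (Suc u mod m) \<or> A (Suc u mod m) u)"

definition non_contractible :: "nat \<Rightarrow> (nat \<Rightarrow> nat \<Rightarrow> bool) \<Rightarrow> bool" where
  "non_contractible n B \<longleftrightarrow> n \<ge> 4 \<or>
     (n = 3 \<and> ((\<forall>u<n. \<not> B (Suc u mod n) u) \<or> (\<forall>u<n. \<not> B u (Suc u mod n))))"

definition is_hom :: "nat \<Rightarrow> (nat \<Rightarrow> nat \<Rightarrow> bool) \<Rightarrow> nat \<Rightarrow> (nat \<Rightarrow> nat \<Rightarrow> bool) \<Rightarrow> (nat \<Rightarrow> nat) \<Rightarrow> bool" where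
  "is_hom m A n B \<phi> \<longleftrightarrow> \<phi> \<in> {..<m} \<rightarrow>\<^sub>E {..<n} \<and> (\<forall>u v. A u v \<longrightarrow> B (\<phi> u) (\<phi> v))"

definition hom_arc :: "(nat \<Rightarrow> nat \<Rightarrow> bool) \<Rightarrow> (nat \<Rightarrow> nat \<Rightarrow> bool) \<Rightarrow> (nat \<Rightarrow> nat) \<Rightarrow> (nat \<Rightarrow> nat) \<Rightarrow> bool" where
  "hom_arc A B \<phi> \<psi> \<longleftrightarrow> (\<forall>u v. A u v \<longrightarrow> B (\<phi> u) (\<psi> v))"

definition edge_diff :: "nat \<Rightarrow> nat \<Rightarrow> (nat \<Rightarrow> nat) \<Rightarrow> nat \<Rightarrow> nat" where
  "edge_diff m n \<phi> j = (\<phi> (Suc j mod m) + n - \<phi> j) mod n"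

definition increasing :: "nat \<Rightarrow> nat \<Rightarrow> (nat \<Rightarrow> nat) \<Rightarrow> nat \<Rightarrow> bool" where
  "increasing m n \<phi> j \<longleftrightarrow> edge_diff m n \<phi> j = 1 mod n"

definition stationary :: "nat \<Rightarrow> nat \<Rightarrow> (nat \<Rightarrow> nat) \<Rightarrow> nat \<Rightarrow> bool" where
  "stationary m n \<phi> j \<longleftrightarrow> edge_diff m n \<phi> j = 0"

definition decreasing :: "nat \<Rightarrow> nat \<Rightarrow> (nat \<Rightarrow> nat) \<Rightarrow> nat \<Rightarrow> bool" where
  "decreasing m n \<phi> j \<longleftrightarrow> edge_diff m n \<phi> j = (n - 1) mod n"

definition wind :: "nat \<Rightarrow> nat \<Rightarrow> (nat \<Rightarrow> nat) \<Rightarrow> real" where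
  "wind m n \<phi> = (real (card {j. j < m \<and> increasing m n \<phi> j})
                  - real (card {j. j < m \<and> decreasing m n \<phi> j})) / real n"

definition mono_wind1 :: "nat \<Rightarrow> (nat \<Rightarrow> nat \<Rightarrow> bool) \<Rightarrow> nat \<Rightarrow> (nat \<Rightarrow> nat \<Rightarrow> bool) \<Rightarrow> (nat \<Rightarrow> nat) \<Rightarrow> bool" where
  "mono_wind1 m A n B \<phi> \<longleftrightarrow> is_hom m A n B \<phi> \<and> wind m n \<phi> = 1
     \<and> (\<forall>j<m. increasing m n \<phi> j \<or> stationary m n \<phi> j)"

definition Mon1 :: "nat \<Rightarrow> (nat \<Rightarrow> nat \<Rightarrow> bool) \<Rightarrow> nat \<Rightarrow> (nat \<Rightarrow> nat \<Rightarrow> bool) \<Rightarrow> nat \<Rightarrow> (nat \<Rightarrow> nat) set" where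
  "Mon1 m A n B i = {\<phi>. mono_wind1 m A n B \<phi> \<and> \<phi> 0 = i mod n}"

definition hom_connected :: "(nat \<Rightarrow> nat \<Rightarrow> bool) \<Rightarrow> (nat \<Rightarrow> nat \<Rightarrow> bool) \<Rightarrow> (nat \<Rightarrow> nat) set \<Rightarrow> bool" where
  "hom_connected A B M \<longleftrightarrow> (\<forall>\<phi>\<in>M. \<forall>\<psi>\<in>M. \<exists>ps. ps \<noteq> [] \<and> hd ps = \<phi> \<and> last ps = \<psi> \<and> set ps \<subseteq> M
      \<and> (\<forall>k. Suc k < length ps \<longrightarrow> hom_arc A B (ps!k) (ps!Suc k) \<or> hom_arc A B (ps!Suc k) (ps!k)))"

definition subpath_set :: "nat \<Rightarrow> nat \<Rightarrow> nat \<Rightarrow> nat set" where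
  "subpath_set m j k = {(j + t) mod m | t. t \<le> k}"

definition one_step_up :: "nat \<Rightarrow> (nat \<Rightarrow> nat \<Rightarrow> bool) \<Rightarrow> nat \<Rightarrow> (nat \<Rightarrow> nat \<Rightarrow> bool) \<Rightarrow> (nat \<Rightarrow> nat) \<Rightarrow> (nat \<Rightarrow> nat) \<Rightarrow> bool" where
  "one_step_up m A n B \<phi> \<psi> \<longleftrightarrow> mono_wind1 m A n B \<phi> \<and> mono_wind1 m A n B \<psi> \<and>
     (\<exists>j<m. \<exists>k<m. (\<forall>t<k. stationary m n \<phi> ((j + t) mod m)) \<and>
        (\<forall>x<m. if x \<in> subpath_set m j k then \<psi> x = Suc (\<phi> x) mod n else \<psi> x = \<phi> x))"

definition up_sequence :: "nat \<Rightarrow> (nat \<Rightarrow> nat \<Rightarrow> bool) \<Rightarrow> nat \<Rightarrow> (nat \<Rightarrow> nat \<Rightarrow> bool) \<Rightarrow> (nat \<Rightarrow> nat) set \<Rightarrow> (nat \<Rightarrow> nat) \<Rightarrow> (nat \<Rightarrow> nat) \<Rightarrow> bool" where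
  "up_sequence m A n B M a b \<longleftrightarrow> (\<exists>ps. ps \<noteq> [] \<and> hd ps = a \<and> last ps = b \<and> set ps \<subseteq> M
      \<and> (\<forall>k. Suc k < length ps \<longrightarrow> one_step_up m A n B (ps!k) (ps!Suc k)))"

end

theory Submission
  imports Defs
begin

lemma modarith0: "a < n \<Longrightarrow> b < n \<Longrightarrow> (a + n - b) mod n = 0 \<Longrightarrow> a = (b::nat)"
proof (cases "b \<le> a")
  case True
  assume "a < n" "b < n" "(a + n - b) mod n = 0"
  then have "(n + (a - b)) mod n = 0" using True by (simp add: add.commute)
  then have "(a - b) mod n = 0" by simp
  then show ?thesis using True \<open>a < n\<close> by simp
next
  case False
  assume "a < n" "b < n" "(a + n - b) mod n = 0"
  then have "a + n - b < n" "0 < a + n - b" using False by auto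
  then show ?thesis using \<open>(a + n - b) mod n = 0\<close> by simp
qed

lemma modarith1: "a < n \<Longrightarrow> b < n \<Longrightarrow> (a + n - b) mod n = 1 \<Longrightarrow> a = Suc b mod (n::nat)"
proof (cases "b \<le> a")
  case True
  assume "a < n" "b < n" "(a + n - b) mod n = 1"
  then have "(n + (a - b)) mod n = 1" using True by (simp add: add.commute)
  then have "(a - b) mod n = 1" by simp
  then have "a - b = 1" using \<open>a < n\<close> by (simp add: mod_less less_imp_diff_less)
  then show ?thesis using True \<open>a < n\<close> by simp
next
  case False
  assume "a < n" "b < n" "(a + n - b) mod n = 1"
  then have "a + n - b < n" using False by auto
  then have "a + n - b = 1" using \<open>(a + n - b) mod n = 1\<close> by simp
  then show ?thesis using False \<open>b < n\<close> \<open>a < n\<close> by (cases "Suc b = n") auto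
qed

lemma suc_mod_diff: "2 \<le> n \<Longrightarrow> (Suc a mod n + n - a mod (n::nat)) mod n = 1"
proof -
  assume n: "2 \<le> n"
  show ?thesis
  proof (cases "Suc (a mod n) = n")
    case True
    then have "Suc a mod n = 0" by (simp add: mod_Suc)
    then show ?thesis using True n by auto
  next
    case False
    then have "Suc a mod n = Suc (a mod n)" by (simp add: mod_Suc)
    then show ?thesis using n by (simp add: mod_Suc)
  qed
qed

lemma card_Suc_split: "card {j. j < Suc k \<and> P j} = card {j. j < k \<and> P j} + (if P k then 1 else 0)"
proof -
  have "{j. j < Suc k \<and> P j} = (if P k then insert k {j. j < k \<and> P j} else {j. j < k \<and> P j})"
    by (auto simp: less_Suc_eq)
  then show ?thesis by auto
qed

lemma lpath_from_rtc:
  assumes "(a,b) \<in> {(x,y). P x y \<and> x \<in> M \<and> y \<in> M}\<^sup>*" and "a \<in> M"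
  shows "\<exists>ps. ps \<noteq> [] \<and> hd ps = a \<and> last ps = b \<and> set ps \<subseteq> M \<and> (\<forall>k. Suc k < length ps \<longrightarrow> P (ps!k) (ps!Suc k))"
  using assms(1)
proof (induction rule: rtrancl_induct)
  case base
  show ?case using assms(2) by (intro exI[of _ "[a]"]) auto
next
  case (step y z)
  then obtain ps where ps: "ps \<noteq> []" "hd ps = a" "last ps = y" "set ps \<subseteq> M"
    "\<forall>k. Suc k < length ps \<longrightarrow> P (ps!k) (ps!Suc k)" by blast
  have Pyz: "P y z" "z \<in> M" using step by auto
  show ?case
  proof (intro exI[of _ "ps @ [z]"] conjI allI impI)
    fix k assume k: "Suc k < length (ps @ [z])"
    show "P ((ps @ [z]) ! k) ((ps @ [z]) ! Suc k)"
    proof (cases "Suc k < length ps")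
      case True then show ?thesis using ps(5) by (simp add: nth_append)
    next
      case False
      then have "Suc k = length ps" using k by simp
      then have "ps ! k = y" using ps(1,3) by (metis diff_Suc_1 last_conv_nth)
      then show ?thesis using \<open>Suc k = length ps\<close> Pyz by (simp add: nth_append)
    qed
  qed (use ps Pyz in auto)
qed

lemma rtc_from_lpath:
  "ps \<noteq> [] \<Longrightarrow> set ps \<subseteq> M \<Longrightarrow> (\<forall>k. Suc k < length ps \<longrightarrow> P (ps!k) (ps!Suc k))
   \<Longrightarrow> (hd ps, last ps) \<in> {(x,y). P x y \<and> x \<in> M \<and> y \<in> M}\<^sup>*"
proof (induction ps)
  case Nil then show ?case by simp
next
  case (Cons x xs)
  show ?case
  proof (cases "xs = []")
    case True then show ?thesis by simp
  next
    case False
    have h: "\<forall>k. Suc k < length xs \<longrightarrow> P (xs!k) (xs!Suc k)"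
    proof (intro allI impI)
      fix k assume "Suc k < length xs"
      then show "P (xs!k) (xs!Suc k)" using Cons.prems(3)[rule_format, of "Suc k"] by simp
    qed
    have "(hd xs, last xs) \<in> {(x,y). P x y \<and> x \<in> M \<and> y \<in> M}\<^sup>*"
      using Cons.IH[OF False _ h] Cons.prems(2) by simp
    moreover have "P x (hd xs)" using Cons.prems(3)[rule_format, of 0] False
      by (simp add: hd_conv_nth)
    moreover have "x \<in> M" "hd xs \<in> M" using Cons.prems(2) False by auto
    ultimately show ?thesis using False
      by (simp add: converse_rtrancl_into_rtrancl)
  qed
qed


locale ctx =
  fixes m n :: nat and C D :: "nat \<Rightarrow> nat \<Rightarrow> bool" and i :: nat
  assumes rc: "refl_cycle m C" and rd: "refl_cycle n D"
begin

definition i0 where "i0 = i mod n"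

lemma m3: "m \<ge> 3" and n3: "n \<ge> 3" using rc rd unfolding refl_cycle_def by auto

lemma i0n: "i0 < n" using n3 unfolding i0_def by simp

lemma Carc: "C u v \<Longrightarrow> u < m \<and> v < m \<and> (u = v \<or> v = Suc u mod m \<or> u = Suc v mod m)"
  using rc unfolding refl_cycle_def by blast

lemma Dloop: "u < n \<Longrightarrow> D u u" using rd unfolding refl_cycle_def by blast

lemma Dedge: "u < n \<Longrightarrow> D u (Suc u mod n) \<or> D (Suc u mod n) u" using rd unfolding refl_cycle_def by blast

definition ok :: "nat \<Rightarrow> nat \<Rightarrow> bool" where
  "ok x v \<longleftrightarrow> (C x (Suc x mod m) \<longrightarrow> D (v mod n) (Suc v mod n)) \<and>
              (C (Suc x mod m) x \<longrightarrow> D (Suc v mod n) (v mod n))"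

definition vlift :: "(nat \<Rightarrow> nat) \<Rightarrow> bool" where
  "vlift L \<longleftrightarrow> L 0 = i0 \<and> L m = i0 + n \<and>
     (\<forall>x<m. L (Suc x) = L x \<or> (L (Suc x) = Suc (L x) \<and> ok x (L x)))"

definition tophi :: "(nat \<Rightarrow> nat) \<Rightarrow> nat \<Rightarrow> nat" where
  "tophi L = (\<lambda>x. if x < m then L x mod n else undefined)"

abbreviation "MM \<equiv> Mon1 m C n D i"

lemma vlift_step: "vlift L \<Longrightarrow> x < m \<Longrightarrow> L (Suc x) = L x \<or> L (Suc x) = Suc (L x)"
  unfolding vlift_def by blast

lemma vlift_mono: "vlift L \<Longrightarrow> x \<le> y \<Longrightarrow> y \<le> m \<Longrightarrow> L x \<le> L y"
proof (induction y)
  case 0 then show ?case by simp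
next
  case (Suc y)
  show ?case
  proof (cases "x = Suc y")
    case False
    then have "L x \<le> L y" using Suc by simp
    moreover have "L y \<le> L (Suc y)" using vlift_step[OF Suc.prems(1), of y] Suc.prems by auto
    ultimately show ?thesis by simp
  qed simp
qed

lemma vlift_bound: "vlift L \<Longrightarrow> x \<le> m \<Longrightarrow> i0 \<le> L x \<and> L x \<le> i0 + n"
  using vlift_mono[of L 0 x] vlift_mono[of L x m] unfolding vlift_def by auto

lemma tophi_succ: "vlift L \<Longrightarrow> u < m \<Longrightarrow> tophi L (Suc u mod m) = L (Suc u) mod n"
proof (cases "Suc u < m")
  case True then show ?thesis by (simp add: tophi_def)
next
  case False
  assume "vlift L" "u < m"
  then have "Suc u = m" using False by simp
  then show ?thesis using \<open>vlift L\<close> m3 i0n unfolding tophi_def vlift_def by auto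
qed

lemma tophi_lt: "x < m \<Longrightarrow> tophi L x = L x mod n" by (simp add: tophi_def)

lemma edge_diff_lift: "vlift L \<Longrightarrow> u < m \<Longrightarrow> edge_diff m n (tophi L) u = L (Suc u) - L u"
proof -
  assume L: "vlift L" and u: "u < m"
  have "edge_diff m n (tophi L) u = (L (Suc u) mod n + n - L u mod n) mod n"
    unfolding edge_diff_def tophi_succ[OF L u] tophi_lt[OF u] by simp
  then show ?thesis using vlift_step[OF L u] suc_mod_diff[of n "L u"] n3 by auto
qed

lemma inc_lift: "vlift L \<Longrightarrow> u < m \<Longrightarrow> increasing m n (tophi L) u \<longleftrightarrow> L (Suc u) = Suc (L u)"
  using vlift_step[of L u] n3 by (auto simp: increasing_def edge_diff_lift)

lemma stat_lift: "vlift L \<Longrightarrow> u < m \<Longrightarrow> stationary m n (tophi L) u \<longleftrightarrow> L (Suc u) = L u"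
  using vlift_step[of L u] n3 by (auto simp: stationary_def edge_diff_lift)

lemma dec_lift: "vlift L \<Longrightarrow> u < m \<Longrightarrow> \<not> decreasing m n (tophi L) u"
  using vlift_step[of L u] n3 by (auto simp: decreasing_def edge_diff_lift)

lemma card_lift: "vlift L \<Longrightarrow> k \<le> m \<Longrightarrow> L 0 + card {j. j < k \<and> L (Suc j) = Suc (L j)} = L k"
proof (induction k)
  case 0 then show ?case by simp
next
  case (Suc k)
  then have "L 0 + card {j. j < k \<and> L (Suc j) = Suc (L j)} = L k" by simp
  then show ?case using vlift_step[OF Suc.prems(1), of k] Suc.prems
    by (auto simp: card_Suc_split)
qed

lemma lift_in_MM: assumes L: "vlift L" shows "tophi L \<in> MM"
proof -
  have fs: "tophi L \<in> {..<m} \<rightarrow>\<^sub>E {..<n}" using n3 by (auto simp: tophi_def PiE_def extensional_def)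
  have arcs: "D (tophi L u) (tophi L v)" if "C u v" for u v
  proof -
    have uv: "u < m" "v < m" "u = v \<or> v = Suc u mod m \<or> u = Suc v mod m" using Carc[OF that] by auto
    show ?thesis
    proof (cases "u = v")
      case True then show ?thesis using uv n3 Dloop by (simp add: tophi_lt)
    next
      case False
      show ?thesis
      proof (cases "v = Suc u mod m")
        case True
        then have "tophi L v = L (Suc u) mod n" using tophi_succ[OF L uv(1)] by simp
        then show ?thesis using vlift_step[OF L uv(1)] L uv(1) that True n3 Dloop
          unfolding vlift_def ok_def by (auto simp: tophi_lt)
      next
        case False
        then have uu: "u = Suc v mod m" using uv \<open>u \<noteq> v\<close> by simp
        then have "tophi L u = L (Suc v) mod n" using tophi_succ[OF L uv(2)] by simp
        then show ?thesis using vlift_step[OF L uv(2)] L uv(2) that uu n3 Dloop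
          unfolding vlift_def ok_def by (auto simp: tophi_lt)
      qed
    qed
  qed
  have hom: "is_hom m C n D (tophi L)" using fs arcs unfolding is_hom_def by blast
  have incset: "{j. j < m \<and> increasing m n (tophi L) j} = {j. j < m \<and> L (Suc j) = Suc (L j)}"
    using inc_lift[OF L] by blast
  have decset: "{j. j < m \<and> decreasing m n (tophi L) j} = {}"
    using dec_lift[OF L] by blast
  have "card {j. j < m \<and> L (Suc j) = Suc (L j)} = n" using card_lift[OF L, of m] L
    unfolding vlift_def by simp
  then have w: "wind m n (tophi L) = 1" unfolding wind_def incset decset using n3 by simp
  have mono: "\<forall>j<m. increasing m n (tophi L) j \<or> stationary m n (tophi L) j"
    using inc_lift[OF L] stat_lift[OF L] vlift_step[OF L] by blast
  have "tophi L 0 = i mod n" using L m3 i0n unfolding vlift_def i0_def by (simp add: tophi_lt)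
  then show ?thesis using hom w mono unfolding Mon1_def mono_wind1_def by blast
qed

lemma MM_range: "\<phi> \<in> MM \<Longrightarrow> x < m \<Longrightarrow> \<phi> x < n"
proof -
  assume "\<phi> \<in> MM" "x < m"
  then have "\<phi> \<in> {..<m} \<rightarrow>\<^sub>E {..<n}" unfolding Mon1_def mono_wind1_def is_hom_def by blast
  then show ?thesis using \<open>x < m\<close> by (auto dest: PiE_mem)
qed

lemma MM_step: assumes p: "\<phi> \<in> MM" and x: "x < m"
  shows "\<phi> (Suc x mod m) = (if increasing m n \<phi> x then Suc (\<phi> x) mod n else \<phi> x)"
proof -
  have a: "\<phi> (Suc x mod m) < n" using MM_range[OF p] m3 by simp
  have b: "\<phi> x < n" using MM_range[OF p x] .
  have "increasing m n \<phi> x \<or> stationary m n \<phi> x" using p x unfolding Mon1_def mono_wind1_def by blast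
  then show ?thesis
    using modarith0[OF a b] modarith1[OF a b] n3
    unfolding increasing_def stationary_def edge_diff_def by auto
qed

lemma MM_lift: assumes p: "\<phi> \<in> MM" shows "\<exists>L. vlift L \<and> \<phi> = tophi L"
proof -
  define L where "L x = i0 + card {j. j < x \<and> increasing m n \<phi> j}" for x
  have LS: "L (Suc x) = (if increasing m n \<phi> x then Suc (L x) else L x)" for x
    unfolding L_def by (simp add: card_Suc_split)
  have decset: "{j. j < m \<and> decreasing m n \<phi> j} = {}"
  proof -
    have "\<not> decreasing m n \<phi> j" if "j < m" for j
    proof -
      have "increasing m n \<phi> j \<or> stationary m n \<phi> j" using p that unfolding Mon1_def mono_wind1_def by blast
      then show ?thesis using n3 unfolding increasing_def stationary_def decreasing_def by auto
    qed
    then show ?thesis by blast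
  qed
  have "wind m n \<phi> = 1" using p unfolding Mon1_def mono_wind1_def by blast
  then have "real (card {j. j < m \<and> increasing m n \<phi> j}) / real n = 1"
    unfolding wind_def decset by simp
  then have cn: "card {j. j < m \<and> increasing m n \<phi> j} = n" using n3 by (simp add: field_simps)
  have p0: "\<phi> 0 = i0" using p unfolding Mon1_def i0_def by simp
  have pl: "\<phi> x = L x mod n" if "x < m" for x
    using that
  proof (induction x)
    case 0 then show ?case using p0 i0n by (simp add: L_def)
  next
    case (Suc x)
    then have x: "x < m" by simp
    have "\<phi> (Suc x) = (if increasing m n \<phi> x then Suc (\<phi> x) mod n else \<phi> x)"
      using MM_step[OF p x] Suc.prems by simp
    then show ?case using Suc LS[of x] by (simp add: mod_Suc_eq)
  qed
  have hom: "is_hom m C n D \<phi>" using p unfolding Mon1_def mono_wind1_def by blast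
  have vl: "vlift L"
    unfolding vlift_def
  proof (intro conjI allI impI)
    show "L 0 = i0" by (simp add: L_def)
    show "L m = i0 + n" using cn by (simp add: L_def)
    fix x assume x: "x < m"
    show "L (Suc x) = L x \<or> L (Suc x) = Suc (L x) \<and> ok x (L x)"
    proof (cases "increasing m n \<phi> x")
      case False then show ?thesis using LS by simp
    next
      case True
      have e: "\<phi> (Suc x mod m) = Suc (L x) mod n" using MM_step[OF p x] True pl[OF x] by (simp add: mod_Suc_eq)
      have h: "\<forall>u v. C u v \<longrightarrow> D (\<phi> u) (\<phi> v)" using hom unfolding is_hom_def by blast
      have "ok x (L x)" unfolding ok_def
        using h[rule_format, of x "Suc x mod m"] h[rule_format, of "Suc x mod m" x] e pl[OF x] by simp
      then show ?thesis using LS True by simp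
    qed
  qed
  have "\<phi> = tophi L"
  proof
    fix x show "\<phi> x = tophi L x"
    proof (cases "x < m")
      case True then show ?thesis using pl[OF True] tophi_lt[OF True] by metis
    next
      case False
      have "\<phi> \<in> {..<m} \<rightarrow>\<^sub>E {..<n}" using hom unfolding is_hom_def by blast
      then have "\<phi> x = undefined" using False by (meson PiE_arb lessThan_iff)
      then show ?thesis using False unfolding tophi_def by simp
    qed
  qed
  then show ?thesis using vl by blast
qed

definition Lmax where "Lmax x = Max ((\<lambda>L. L x) ` {L. vlift L})"
definition Lmin where "Lmin x = Min ((\<lambda>L. L x) ` {L. vlift L})"

lemma fin_vals: "x \<le> m \<Longrightarrow> finite ((\<lambda>L. L x) ` {L. vlift L})"
  proof (rule finite_subset[of _ "{..i0+n}"])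
  assume "x \<le> m"
  then show "(\<lambda>L. L x) ` {L. vlift L} \<subseteq> {..i0+n}" using vlift_bound by fastforce
qed simp

lemma Lmax_ge: "vlift L \<Longrightarrow> x \<le> m \<Longrightarrow> L x \<le> Lmax x"
  unfolding Lmax_def using fin_vals by (intro Max_ge) auto
lemma Lmin_le: "vlift L \<Longrightarrow> x \<le> m \<Longrightarrow> Lmin x \<le> L x"
  unfolding Lmin_def using fin_vals by (intro Min_le) auto
lemma Lmax_in: "vlift L0 \<Longrightarrow> x \<le> m \<Longrightarrow> \<exists>L. vlift L \<and> Lmax x = L x"
proof -
  assume "vlift L0" "x \<le> m"
  then have "Lmax x \<in> (\<lambda>L. L x) ` {L. vlift L}" unfolding Lmax_def using fin_vals
    by (intro Max_in) auto
  then show ?thesis by auto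
qed
lemma Lmin_in: "vlift L0 \<Longrightarrow> x \<le> m \<Longrightarrow> \<exists>L. vlift L \<and> Lmin x = L x"
proof -
  assume "vlift L0" "x \<le> m"
  then have "Lmin x \<in> (\<lambda>L. L x) ` {L. vlift L}" unfolding Lmin_def using fin_vals
    by (intro Min_in) auto
  then show ?thesis by auto
qed

lemma vlift_Lmax: assumes L0: "vlift L0" shows "vlift Lmax"
  unfolding vlift_def
proof (intro conjI allI impI)
  show "Lmax 0 = i0" using Lmax_in[OF L0, of 0] unfolding vlift_def by auto
  show "Lmax m = i0 + n" using Lmax_in[OF L0, of m] unfolding vlift_def by auto
  fix x assume x: "x < m"
  obtain L1 where L1: "vlift L1" "Lmax (Suc x) = L1 (Suc x)" using Lmax_in[OF L0, of "Suc x"] x by auto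
  obtain L2 where L2: "vlift L2" "Lmax x = L2 x" using Lmax_in[OF L0, of x] x by auto
  have a: "L2 (Suc x) \<le> Lmax (Suc x)" "L1 x \<le> Lmax x" using Lmax_ge L1(1) L2(1) x by auto
  have s1: "L1 (Suc x) = L1 x \<or> L1 (Suc x) = Suc (L1 x)" using vlift_step[OF L1(1) x] .
  have s2: "L2 (Suc x) = L2 x \<or> L2 (Suc x) = Suc (L2 x)" using vlift_step[OF L2(1) x] .
  show "Lmax (Suc x) = Lmax x \<or> Lmax (Suc x) = Suc (Lmax x) \<and> ok x (Lmax x)"
  proof (cases "Lmax (Suc x) = Lmax x")
    case False
    then have e: "Lmax (Suc x) = Suc (Lmax x)" "L1 x = Lmax x" "L1 (Suc x) = Suc (L1 x)"
      using a s1 s2 L1(2) L2(2) by auto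
    have "ok x (L1 x)" using L1(1) x e(3) unfolding vlift_def by (metis n_not_Suc_n)
    then show ?thesis using e by simp
  qed simp
qed

lemma vlift_Lmin: assumes L0: "vlift L0" shows "vlift Lmin"
  unfolding vlift_def
proof (intro conjI allI impI)
  show "Lmin 0 = i0" using Lmin_in[OF L0, of 0] unfolding vlift_def by auto
  show "Lmin m = i0 + n" using Lmin_in[OF L0, of m] unfolding vlift_def by auto
  fix x assume x: "x < m"
  obtain L1 where L1: "vlift L1" "Lmin (Suc x) = L1 (Suc x)" using Lmin_in[OF L0, of "Suc x"] x by auto
  obtain L2 where L2: "vlift L2" "Lmin x = L2 x" using Lmin_in[OF L0, of x] x by auto
  have a: "Lmin (Suc x) \<le> L2 (Suc x)" "Lmin x \<le> L1 x" using Lmin_le L1(1) L2(1) x by auto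
  have s1: "L1 (Suc x) = L1 x \<or> L1 (Suc x) = Suc (L1 x)" using vlift_step[OF L1(1) x] .
  have s2: "L2 (Suc x) = L2 x \<or> L2 (Suc x) = Suc (L2 x)" using vlift_step[OF L2(1) x] .
  show "Lmin (Suc x) = Lmin x \<or> Lmin (Suc x) = Suc (Lmin x) \<and> ok x (Lmin x)"
  proof (cases "Lmin (Suc x) = Lmin x")
    case False
    then have e: "Lmin (Suc x) = Suc (Lmin x)" "L2 (Suc x) = Suc (L2 x)"
      using a s1 s2 L1(2) L2(2) by auto
    have "ok x (L2 x)" using L2(1) x e(2) unfolding vlift_def by (metis n_not_Suc_n)
    then show ?thesis using e L2(2) by simp
  qed simp
qed

lemma osu_adj: assumes "one_step_up m C n D \<phi> \<psi>"
  shows "hom_arc C D \<phi> \<psi> \<or> hom_arc C D \<psi> \<phi>"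
proof -
  obtain j k where jk: "j < m" "k < m" and st: "\<forall>t<k. stationary m n \<phi> ((j + t) mod m)"
    and sh: "\<forall>x<m. if x \<in> subpath_set m j k then \<psi> x = Suc (\<phi> x) mod n else \<psi> x = \<phi> x"
    using assms unfolding one_step_up_def by blast
  have hp: "is_hom m C n D \<phi>" and hq: "is_hom m C n D \<psi>"
    using assms unfolding one_step_up_def mono_wind1_def by blast+
  have rng: "\<phi> x < n" if "x < m" for x
  proof -
    have "\<phi> \<in> {..<m} \<rightarrow>\<^sub>E {..<n}" using hp unfolding is_hom_def by blast
    then show ?thesis using that by (auto dest: PiE_mem)
  qed
  have hpa: "\<And>u v. C u v \<Longrightarrow> D (\<phi> u) (\<phi> v)" and hqa: "\<And>u v. C u v \<Longrightarrow> D (\<psi> u) (\<psi> v)"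
    using hp hq unfolding is_hom_def by auto
  have const: "\<phi> ((j + t) mod m) = \<phi> j" if "t \<le> k" for t
    using that
  proof (induction t)
    case 0 then show ?case using jk by simp
  next
    case (Suc t)
    then have "t < k" by simp
    then have "edge_diff m n \<phi> ((j + t) mod m) = 0" using st unfolding stationary_def by blast
    moreover have "Suc ((j + t) mod m) mod m = (j + Suc t) mod m" by (simp add: mod_Suc_eq)
    ultimately have e0: "(\<phi> ((j + Suc t) mod m) + n - \<phi> ((j + t) mod m)) mod n = 0"
      unfolding edge_diff_def by simp
    have r1: "\<phi> ((j + Suc t) mod m) < n" and r2: "\<phi> ((j + t) mod m) < n" using rng m3 by simp_all
    have "\<phi> ((j + Suc t) mod m) = \<phi> ((j + t) mod m)"
      using modarith0[OF r1 r2 e0] .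
    then show ?case using Suc by simp
  qed
  define d where "d = \<phi> j"
  have d: "d < n" using rng jk unfolding d_def by simp
  have inS: "x < m \<and> \<phi> x = d" if "x \<in> subpath_set m j k" for x
    using that const m3 unfolding subpath_set_def d_def by auto
  have psiS: "\<psi> x = Suc d mod n" if "x \<in> subpath_set m j k" for x
    using sh inS[OF that] that by auto
  have psiN: "\<psi> x = \<phi> x" if "x < m" "x \<notin> subpath_set m j k" for x
    using sh that by auto
  show ?thesis
  proof (cases "D d (Suc d mod n)")
    case True
    have "hom_arc C D \<phi> \<psi>" unfolding hom_arc_def
    proof (intro allI impI)
      fix u v assume uv: "C u v"
      have um: "u < m" "v < m" using Carc[OF uv] by auto
      show "D (\<phi> u) (\<psi> v)"
      proof (cases "v \<in> subpath_set m j k")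
        case True
        show ?thesis
        proof (cases "u \<in> subpath_set m j k")
          case True then show ?thesis using inS psiS \<open>v \<in> subpath_set m j k\<close> \<open>D d (Suc d mod n)\<close> by simp
        next
          case False then show ?thesis using hqa[OF uv] psiN um by simp
        qed
      next
        case False then show ?thesis using hpa[OF uv] psiN um by simp
      qed
    qed
    then show ?thesis by blast
  next
    case False
    then have DD: "D (Suc d mod n) d" using Dedge[OF d] by blast
    have "hom_arc C D \<psi> \<phi>" unfolding hom_arc_def
    proof (intro allI impI)
      fix u v assume uv: "C u v"
      have um: "u < m" "v < m" using Carc[OF uv] by auto
      show "D (\<psi> u) (\<phi> v)"
      proof (cases "u \<in> subpath_set m j k")
        case True
        show ?thesis
        proof (cases "v \<in> subpath_set m j k")
          case True then show ?thesis using inS psiS \<open>u \<in> subpath_set m j k\<close> DD by simp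
        next
          case False then show ?thesis using hqa[OF uv] psiN um by simp
        qed
      next
        case False then show ?thesis using hpa[OF uv] psiN um by simp
      qed
    qed
    then show ?thesis by blast
  qed
qed

lemma subpath_mem: assumes "a \<le> b" "b < m" "x < m"
  shows "x \<in> subpath_set m a (b - a) \<longleftrightarrow> a \<le> x \<and> x \<le> b"
proof
  assume "x \<in> subpath_set m a (b - a)"
  then obtain t where "x = (a + t) mod m" "t \<le> b - a" unfolding subpath_set_def by blast
  then show "a \<le> x \<and> x \<le> b" using assms by simp
next
  assume "a \<le> x \<and> x \<le> b"
  then have "x = (a + (x - a)) mod m" "x - a \<le> b - a" using assms by auto
  then show "x \<in> subpath_set m a (b - a)" unfolding subpath_set_def by blast
qed

lemma upmove:
  assumes L: "vlift L" and L': "vlift L'" and ab: "1 \<le> a" "a \<le> b" "b < m"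
    and flat: "\<forall>z. a \<le> z \<and> z < b \<longrightarrow> L (Suc z) = L z"
    and L'def: "\<forall>x\<le>m. L' x = (if a \<le> x \<and> x \<le> b then Suc (L x) else L x)"
  shows "one_step_up m C n D (tophi L) (tophi L')"
  unfolding one_step_up_def
proof (intro conjI)
  show "mono_wind1 m C n D (tophi L)" using lift_in_MM[OF L] unfolding Mon1_def by blast
  show "mono_wind1 m C n D (tophi L')" using lift_in_MM[OF L'] unfolding Mon1_def by blast
  have st: "\<forall>t<b - a. stationary m n (tophi L) ((a + t) mod m)"
  proof (intro allI impI)
    fix t assume t: "t < b - a"
    then have e: "(a + t) mod m = a + t" "a + t < m" using ab by auto
    show "stationary m n (tophi L) ((a + t) mod m)" unfolding e(1) stat_lift[OF L e(2)]
      using flat t by auto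
  qed
  have sh: "\<forall>x<m. if x \<in> subpath_set m a (b - a) then tophi L' x = Suc (tophi L x) mod n
       else tophi L' x = tophi L x"
  proof (intro allI impI)
    fix x assume x: "x < m"
    show "if x \<in> subpath_set m a (b - a) then tophi L' x = Suc (tophi L x) mod n
       else tophi L' x = tophi L x"
      unfolding subpath_mem[OF ab(2,3) x] tophi_lt[OF x] using L'def x
      by (auto simp: mod_Suc_eq)
  qed
  show "\<exists>j<m. \<exists>k<m. (\<forall>t<k. stationary m n (tophi L) ((j + t) mod m)) \<and>
        (\<forall>x<m. if x \<in> subpath_set m j k then tophi L' x = Suc (tophi L x) mod n
               else tophi L' x = tophi L x)"
  proof -
    have "a < m" "b - a < m" using ab by auto
    then show ?thesis using st sh by blast
  qed
qed

lemma up_path: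
  assumes M: "vlift M"
  shows "vlift L \<Longrightarrow> \<forall>x\<le>m. L x \<le> M x \<Longrightarrow>
    (tophi L, tophi M) \<in> {(x,y). one_step_up m C n D x y \<and> x \<in> MM \<and> y \<in> MM}\<^sup>*"
proof (induction "\<Sum>x\<le>m. M x - L x" arbitrary: L rule: less_induct)
  case less
  note L = less.prems(1) and le = less.prems(2)
  show ?case
  proof (cases "\<exists>x\<le>m. L x < M x")
    case False
    then have "\<forall>x\<le>m. L x = M x" using le by (meson le_neq_implies_less)
    then have "tophi L = tophi M" unfolding tophi_def by (auto intro!: ext)
    then show ?thesis by simp
  next
    case True
    define x where "x = (LEAST x. x \<le> m \<and> L x < M x)"
    have x: "x \<le> m" "L x < M x" using LeastI_ex[OF True[simplified Bex_def]] unfolding x_def by auto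
    have xl: "\<not> (y \<le> m \<and> L y < M y)" if "y < x" for y
      using not_less_Least[of y "\<lambda>x. x \<le> m \<and> L x < M x"] that unfolding x_def by blast
    have "x \<noteq> 0"
    proof
      assume "x = 0" then show False using x L M unfolding vlift_def by simp
    qed
    moreover have "x \<noteq> m"
    proof
      assume "x = m" then show False using x L M unfolding vlift_def by simp
    qed
    ultimately have x1: "1 \<le> x" "x < m" using x by auto
    define x1 where "x1 = x - 1"
    have sx1: "Suc x1 = x" "x1 < m" using x1 unfolding x1_def by auto
    have eq1: "L x1 = M x1" using xl[of x1] le sx1 by (metis le_neq_implies_less less_Suc_eq less_imp_le)
    define d where "d = L x1"
    have Ms: "M x = Suc d" "ok x1 d"
    proof -
      have a: "M (Suc x1) = M x1 \<or> M (Suc x1) = Suc (M x1) \<and> ok x1 (M x1)" using M sx1(2) unfolding vlift_def by blast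
      have b: "L x1 \<le> L x" using vlift_step[OF L sx1(2)] sx1 by auto
      show "M x = Suc d" using a b x(2) sx1 eq1 unfolding d_def by auto
      then show "ok x1 d" using a sx1 eq1 unfolding d_def by auto
    qed
    have Lx: "L x = d" using vlift_step[OF L sx1(2)] sx1 x(2) Ms(1) unfolding d_def by auto
    have ex: "\<exists>y. x \<le> y \<and> y < m \<and> L (Suc y) \<noteq> d"
    proof -
      have "M x \<le> M m" using vlift_mono[OF M x(1)] by simp
      moreover have "L m = M m" using L M unfolding vlift_def by simp
      ultimately have "L (Suc (m - 1)) \<noteq> d" using Ms(1) x1 by simp
      then show ?thesis using x1 by (intro exI[of _ "m - 1"]) auto
    qed
    define y where "y = (LEAST y. x \<le> y \<and> y < m \<and> L (Suc y) \<noteq> d)"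
    have y: "x \<le> y" "y < m" "L (Suc y) \<noteq> d" using LeastI_ex[OF ex] unfolding y_def by auto
    have yl: "L (Suc z) = d" if "x \<le> z" "z < y" for z
      using not_less_Least[of z "\<lambda>y. x \<le> y \<and> y < m \<and> L (Suc y) \<noteq> d"] that y(2) unfolding y_def by auto
    have flatd: "L z = d" if "x \<le> z" "z \<le> y" for z
    proof (cases "z = x")
      case True then show ?thesis using Lx by simp
    next
      case False
      have "z = Suc (z - 1)" "x \<le> z - 1" "z - 1 < y" using that False by auto
      then show ?thesis using yl by metis
    qed
    have Ly: "L (Suc y) = Suc d" using vlift_step[OF L y(2)] flatd[of y] y by auto
    define L' where "L' z = (if x \<le> z \<and> z \<le> y then Suc (L z) else L z)" for z
    have L': "vlift L'"
      unfolding vlift_def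
    proof (intro conjI allI impI)
      show "L' 0 = i0" using L x1 unfolding vlift_def L'_def by auto
      show "L' m = i0 + n" using L y unfolding vlift_def L'_def by auto
      fix z assume z: "z < m"
      show "L' (Suc z) = L' z \<or> L' (Suc z) = Suc (L' z) \<and> ok z (L' z)"
      proof (cases "Suc z < x \<or> y < z")
        case True
        then have "L' (Suc z) = L (Suc z)" "L' z = L z" unfolding L'_def by auto
        then show ?thesis using L z unfolding vlift_def by simp
      next
        case False
        show ?thesis
        proof (cases "Suc z = x")
          case True
          then have "z = x1" using sx1 by simp
          have a1: "L' z = L x1" unfolding L'_def using \<open>z = x1\<close> sx1 by auto
          have a2: "L' (Suc z) = Suc (L x)" unfolding L'_def using True y(1) by auto
          have "L' z = d" "L' (Suc z) = Suc d" using a1 a2 Lx unfolding d_def by auto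
          then show ?thesis using Ms(2) \<open>z = x1\<close> by simp
        next
          case False
          then have zr: "x \<le> z" "z \<le> y" using \<open>\<not> (Suc z < x \<or> y < z)\<close> by auto
          then have "L' z = Suc d" unfolding L'_def using flatd by simp
          moreover have "L' (Suc z) = Suc d"
          proof (cases "z = y")
            case True then show ?thesis unfolding L'_def using Ly by simp
          next
            case False
            then have "Suc z \<le> y" using zr by simp
            then show ?thesis unfolding L'_def using flatd[of "Suc z"] zr by simp
          qed
          ultimately show ?thesis by simp
        qed
      qed
    qed
    have le': "\<forall>z\<le>m. L' z \<le> M z"
    proof (intro allI impI)
      fix z assume z: "z \<le> m"
      show "L' z \<le> M z"
      proof (cases "x \<le> z \<and> z \<le> y")
        case True
        then have "L' z = Suc d" unfolding L'_def using flatd by simp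
        moreover have "M x \<le> M z" using vlift_mono[OF M _ z] True by simp
        ultimately show ?thesis using Ms(1) by simp
      next
        case False then have "L' z = L z" unfolding L'_def by simp
        then show ?thesis using le z by simp
      qed
    qed
    have lt: "(\<Sum>z\<le>m. M z - L' z) < (\<Sum>z\<le>m. M z - L z)"
    proof (rule sum_strict_mono_ex1)
      show "finite {..m}" by simp
      show "\<forall>z\<in>{..m}. M z - L' z \<le> M z - L z" unfolding L'_def by auto
      have "M x - L' x < M x - L x" unfolding L'_def using Lx Ms(1) y(1) by simp
      then show "\<exists>z\<in>{..m}. M z - L' z < M z - L z" using x(1) by blast
    qed
    have IH: "(tophi L', tophi M) \<in> {(x,y). one_step_up m C n D x y \<and> x \<in> MM \<and> y \<in> MM}\<^sup>*"
      using less.hyps[OF lt L' le'] .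
    have step: "one_step_up m C n D (tophi L) (tophi L')"
    proof (rule upmove[OF L L' x1(1) y(1) y(2)])
      show "\<forall>z. x \<le> z \<and> z < y \<longrightarrow> L (Suc z) = L z" using yl flatd by auto
      show "\<forall>z\<le>m. L' z = (if x \<le> z \<and> z \<le> y then Suc (L z) else L z)" unfolding L'_def by simp
    qed
    have "tophi L \<in> MM" "tophi L' \<in> MM" using lift_in_MM L L' by auto
    then show ?thesis using IH step by (auto intro: converse_rtrancl_into_rtrancl)
  qed
qed

end

theorem fact3p5:
  fixes m n i :: nat and C D :: "nat \<Rightarrow> nat \<Rightarrow> bool"
  assumes "refl_cycle m C" and "refl_cycle n D" and "non_contractible n D"
    and "1 \<le> i" and "i \<le> n"
  shows "hom_connected C D (Mon1 m C n D i) \<and>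
    (Mon1 m C n D i \<noteq> {} \<longrightarrow>
      (\<exists>\<Phi>min\<in>Mon1 m C n D i. \<exists>\<Phi>max\<in>Mon1 m C n D i. \<forall>\<phi>\<in>Mon1 m C n D i.
         up_sequence m C n D (Mon1 m C n D i) \<Phi>min \<phi> \<and>
         up_sequence m C n D (Mon1 m C n D i) \<phi> \<Phi>max))"
proof -
  interpret ctx m n C D i using assms(1,2) by unfold_locales
  define MS where "MS = Mon1 m C n D i"
  define UPR where "UPR = {(x,y). one_step_up m C n D x y \<and> x \<in> MS \<and> y \<in> MS}"
  define ADJ where "ADJ = {(x,y). (hom_arc C D x y \<or> hom_arc C D y x) \<and> x \<in> MS \<and> y \<in> MS}"
  have sub: "UPR \<subseteq> ADJ" unfolding UPR_def ADJ_def using osu_adj by blast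
  have symm: "ADJ\<inverse> = ADJ" unfolding ADJ_def by auto
  show ?thesis
  proof (cases "MS = {}")
    case True
    then show ?thesis unfolding hom_connected_def MS_def by simp
  next
    case False
    then obtain \<phi>0 where "\<phi>0 \<in> MS" by blast
    then obtain L0 where L0: "vlift L0" using MM_lift unfolding MS_def by blast
    have vmax: "vlift Lmax" and vmin: "vlift Lmin" using vlift_Lmax[OF L0] vlift_Lmin[OF L0] by auto
    have inmax: "tophi Lmax \<in> MS" and inmin: "tophi Lmin \<in> MS"
      using lift_in_MM vmax vmin unfolding MS_def by auto
    have paths: "(tophi Lmin, \<phi>) \<in> UPR\<^sup>* \<and> (\<phi>, tophi Lmax) \<in> UPR\<^sup>*" if p: "\<phi> \<in> MS" for \<phi>
    proof -
      obtain L where L: "vlift L" "\<phi> = tophi L" using MM_lift p unfolding MS_def by blast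
      have "(tophi Lmin, tophi L) \<in> UPR\<^sup>*"
        using up_path[OF L(1) vmin] Lmin_le[OF L(1)] unfolding UPR_def MS_def by blast
      moreover have "(tophi L, tophi Lmax) \<in> UPR\<^sup>*"
        using up_path[OF vmax L(1)] Lmax_ge[OF L(1)] unfolding UPR_def MS_def by blast
      ultimately show ?thesis using L(2) by simp
    qed
    have conn: "hom_connected C D MS"
      unfolding hom_connected_def
    proof (intro ballI)
      fix \<phi> \<psi> assume p: "\<phi> \<in> MS" and q: "\<psi> \<in> MS"
      have "(\<phi>, tophi Lmax) \<in> ADJ\<^sup>*" using paths[OF p] rtrancl_mono[OF sub] by blast
      moreover have "(\<psi>, tophi Lmax) \<in> ADJ\<^sup>*" using paths[OF q] rtrancl_mono[OF sub] by blast
      then have "(tophi Lmax, \<psi>) \<in> (ADJ\<inverse>)\<^sup>*" by (simp add: rtrancl_converseI)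
      then have "(tophi Lmax, \<psi>) \<in> ADJ\<^sup>*" using symm by simp
      ultimately have "(\<phi>, \<psi>) \<in> ADJ\<^sup>*" by (rule rtrancl_trans)
      then show "\<exists>ps. ps \<noteq> [] \<and> hd ps = \<phi> \<and> last ps = \<psi> \<and> set ps \<subseteq> MS \<and>
          (\<forall>k. Suc k < length ps \<longrightarrow> hom_arc C D (ps ! k) (ps ! Suc k) \<or> hom_arc C D (ps ! Suc k) (ps ! k))"
        using lpath_from_rtc[of \<phi> \<psi> "\<lambda>x y. hom_arc C D x y \<or> hom_arc C D y x" MS] p
        unfolding ADJ_def by blast
    qed
    have ups: "\<forall>\<phi>\<in>MS. up_sequence m C n D MS (tophi Lmin) \<phi> \<and> up_sequence m C n D MS \<phi> (tophi Lmax)"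
    proof
      fix \<phi> assume p: "\<phi> \<in> MS"
      show "up_sequence m C n D MS (tophi Lmin) \<phi> \<and> up_sequence m C n D MS \<phi> (tophi Lmax)"
        unfolding up_sequence_def
        using lpath_from_rtc[of "tophi Lmin" \<phi> "one_step_up m C n D" MS]
          lpath_from_rtc[of \<phi> "tophi Lmax" "one_step_up m C n D" MS]
          paths[OF p] inmin p unfolding UPR_def by blast
    qed
    show ?thesis using conn ups inmin inmax unfolding MS_def by blast
  qed
qed

end
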